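(* Under the assumptions (i), (ii), (iii) of the Main Result (including convexity of $L_T$), any point $\hat\theta_T$ with $\nabla L_T(\hat\theta_T)=0$ lies in $\mathcal{B}=\{\hat\theta_T^{\mathrm{NS}}+e:\|e\|_\Sigma\le r\}$.
   Context: Setting: $\ell_1,\dots,\ell_n:\mathbb{R}^d\to\mathbb{R}$ twice continuously differentiable, $T\subseteq[n]$, $L_T=\sum_{i\notin T}\ell_i$ convex, $\hat\theta$ with $\sum_{i=1}^n\nabla\ell_i(\hat\theta)=0$, $H_\theta=\nabla^2L_T(\theta)$, $g=\nabla L_T(\hat\theta)$, $H=H_{\hat\theta}$ invertible, $\hat\theta_T^{\mathrm{NS}}=\hat\theta-H^{-1}g$; $\Sigma$ positive definite, $\|v\|_M=\sqrt{v^\top Mv}$, $r>0$. (i): $\|\Sigma^{1/2}H_\theta^{-1}\Sigma^{1/2}\|_{\mathrm{op}}\le C_{\mathrm{op}}$ for all $\theta\in\mathcal B$. (ii): $\|(H_\theta-H)H^{-1}g\|_{\Sigma^{-1}}\le C_h$ for all $\theta$ on the segment $[\hat\theta,\hat\theta_T^{\mathrm{NS}}]$. (iii): $C_hC_{\mathrm{op}}<r$. *)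

theory Defs
  imports "HOL-Analysis.Analysis"
begin

definition grad :: "(real^'d \<Rightarrow> real) \<Rightarrow> real^'d \<Rightarrow> real^'d" where
  "grad f x = (\<chi> i. frechet_derivative f (at x) (axis i 1))"

definition hess :: "(real^'d \<Rightarrow> real) \<Rightarrow> real^'d \<Rightarrow> real^'d^'d" where
  "hess f x = jacobian (grad f) (at x)"

definition C2 :: "(real^'d \<Rightarrow> real) \<Rightarrow> bool" where
  "C2 f \<longleftrightarrow> (\<forall>x. f differentiable (at x)) \<and> (\<forall>x. grad f differentiable (at x))
              \<and> continuous_on UNIV (hess f)"

definition sym_mat :: "real^'d^'d \<Rightarrow> bool" where
  "sym_mat A \<longleftrightarrow> transpose A = A"

definition pos_def :: "real^'d^'d \<Rightarrow> bool" where
  "pos_def A \<longleftrightarrow> sym_mat A \<and> (\<forall>v. v \<noteq> 0 \<longrightarrow> v \<bullet> (A *v v) > 0)"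

definition pos_semidef :: "real^'d^'d \<Rightarrow> bool" where
  "pos_semidef A \<longleftrightarrow> sym_mat A \<and> (\<forall>v. v \<bullet> (A *v v) \<ge> 0)"

definition mat_sqrt :: "real^'d^'d \<Rightarrow> real^'d^'d" where
  "mat_sqrt A = (THE R. pos_semidef R \<and> R ** R = A)"

definition mnorm :: "real^'d^'d \<Rightarrow> real^'d \<Rightarrow> real" where
  "mnorm M v = sqrt (v \<bullet> (M *v v))"

definition op_norm :: "real^'d^'d \<Rightarrow> real" where
  "op_norm A = onorm (\<lambda>v. A *v v)"

end

theory Submission
  imports Defs
begin

definition symb :: "real^'d^'d \<Rightarrow> bool" where
  "symb M \<longleftrightarrow> (\<forall>a c. (M *v a) \<bullet> c = a \<bullet> (M *v c))"

lemma sym_mat_symb: "sym_mat M \<Longrightarrow> symb M"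
  unfolding sym_mat_def symb_def
  by (metis dot_lmul_matrix vector_transpose_matrix)

lemma symb_sym_mat: "symb (M::real^'d^'d) \<Longrightarrow> sym_mat M"
  unfolding sym_mat_def symb_def
proof -
  assume h: "\<forall>a c. (M *v a) \<bullet> c = a \<bullet> (M *v c)"
  show "transpose M = M"
  proof (rule matrix_eq[THEN iffD2], intro allI)
    fix x :: "real^'d"
    have "(transpose M *v x) \<bullet> y = (M *v x) \<bullet> y" for y
      using h by (metis dot_lmul_matrix inner_commute transpose_matrix_vector)
    then have "(transpose M *v x - M *v x) \<bullet> y = 0" for y
      by (simp add: inner_diff_left)
    from this[of "transpose M *v x - M *v x"] show "transpose M *v x = M *v x"
      by simp
  qed
qed

lemma inv_facts:
  fixes H :: "real^'d^'d"
  assumes "invertible H"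
  shows "H *v (matrix_inv H *v x) = x" "matrix_inv H *v (H *v x) = x"
proof -
  have "H ** matrix_inv H = mat 1 \<and> matrix_inv H ** H = mat 1"
    using assms unfolding invertible_def matrix_inv_def by (rule someI_ex)
  then show "H *v (matrix_inv H *v x) = x" "matrix_inv H *v (H *v x) = x"
    by (simp_all add: matrix_vector_mul_assoc)
qed

lemma symb_inv:
  assumes "symb H" "invertible H"
  shows "symb (matrix_inv H)"
  unfolding symb_def
proof (intro allI)
  fix a c
  have "(matrix_inv H *v a) \<bullet> c = (matrix_inv H *v a) \<bullet> (H *v (matrix_inv H *v c))"
    using inv_facts[OF assms(2)] by simp
  also have "\<dots> = (H *v (matrix_inv H *v a)) \<bullet> (matrix_inv H *v c)"
    using assms(1) unfolding symb_def by simp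
  also have "\<dots> = a \<bullet> (matrix_inv H *v c)" using inv_facts[OF assms(2)] by simp
  finally show "(matrix_inv H *v a) \<bullet> c = a \<bullet> (matrix_inv H *v c)" .
qed

lemma psd_inv:
  assumes "symb H" "invertible H" "\<And>v. (H *v v) \<bullet> v \<ge> 0"
  shows "(matrix_inv H *v a) \<bullet> a \<ge> 0"
proof -
  have "(matrix_inv H *v a) \<bullet> a = (matrix_inv H *v a) \<bullet> (H *v (matrix_inv H *v a))"
    using inv_facts[OF assms(2)] by simp
  also have "\<dots> = (H *v (matrix_inv H *v a)) \<bullet> (matrix_inv H *v a)" by (simp add: inner_commute)
  finally show ?thesis using assms(3) by simp
qed

lemma bil_CS:
  fixes M :: "real^'d^'d"
  assumes "symb M" "\<And>v. (M *v v) \<bullet> v \<ge> 0"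
  shows "((M *v a) \<bullet> c)^2 \<le> ((M *v a) \<bullet> a) * ((M *v c) \<bullet> c)"
proof -
  define p where "p = (M *v a) \<bullet> a"
  define q where "q = (M *v a) \<bullet> c"
  define s where "s = (M *v c) \<bullet> c"
  have sym: "(M *v c) \<bullet> a = q" using assms(1) unfolding symb_def q_def by (simp add: inner_commute)
  have key: "p + 2*t*q + t^2 * s \<ge> 0" for t
  proof -
    have "(M *v (a + t *\<^sub>R c)) \<bullet> (a + t *\<^sub>R c) = p + 2*t*q + t^2 * s"
      by (simp add: matrix_vector_right_distrib matrix_vector_mult_scaleR inner_add_left inner_add_right
          p_def q_def s_def sym[unfolded q_def] power2_eq_square algebra_simps)
    then show ?thesis using assms(2)[of "a + t *\<^sub>R c"] by simp
  qed
  have p0: "p \<ge> 0" "s \<ge> 0" using assms(2) p_def s_def by auto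
  show ?thesis
  proof (cases "s = 0")
    case True
    have "q = 0"
    proof (rule ccontr)
      assume "q \<noteq> 0"
      have "p + 2*(-(p+1)/(2*q))*q + (-(p+1)/(2*q))^2 * s \<ge> 0" by (rule key)
      then show False using True \<open>q \<noteq> 0\<close> by (simp add: field_simps)
    qed
    then show ?thesis using True p_def q_def s_def by simp
  next
    case False
    then have sp: "s > 0" using p0 by simp
    have "p + 2*(-q/s)*q + (-q/s)^2 * s \<ge> 0" by (rule key)
    then have "p - q^2/s \<ge> 0" using sp by (simp add: field_simps power2_eq_square)
    then have "q^2 \<le> p * s" using sp by (simp add: field_simps)
    then show ?thesis by (simp add: p_def q_def s_def)
  qed
qed

definition eigON :: "real^'d^'d \<Rightarrow> (real^'d) set \<Rightarrow> bool" where
  "eigON A E \<longleftrightarrow> finite E \<and> (\<forall>e\<in>E. norm e = 1) \<and> (\<forall>e\<in>E. \<forall>f\<in>E. e \<noteq> f \<longrightarrow> e \<bullet> f = 0)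
     \<and> (\<forall>e\<in>E. A *v e = ((A *v e) \<bullet> e) *\<^sub>R e)"

lemma eigON_card: "eigON A E \<Longrightarrow> card E \<le> DIM(real^'d)" for E :: "(real^'d) set"
proof -
  assume h: "eigON A E"
  have "pairwise orthogonal E" using h unfolding eigON_def pairwise_def orthogonal_def by blast
  moreover have "0 \<notin> E" using h unfolding eigON_def by force
  ultimately have "independent E" by (rule pairwise_orthogonal_independent)
  then show ?thesis using independent_bound by blast
qed

lemma eigON_extend:
  fixes A :: "real^'d^'d"
  assumes sA: "symb A" and E: "eigON A E" and sp: "span E \<noteq> UNIV"
  shows "\<exists>u. u \<notin> E \<and> eigON A (insert u E)"
proof -
  define S where "S = {x::real^'d. \<forall>e\<in>E. x \<bullet> e = 0}"
  have clS: "closed S"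
  proof -
    have "S = (\<Inter>e\<in>E. {x. e \<bullet> x = 0})" unfolding S_def by (auto simp: inner_commute)
    then show ?thesis by (simp add: closed_INT closed_hyperplane)
  qed
  have "dim E < DIM(real^'d)"
    using sp by (metis dim_eq_full dim_subset_UNIV le_neq_implies_less)
  then obtain x0 :: "real^'d" where x0: "x0 \<noteq> 0" "\<And>y. y \<in> span E \<Longrightarrow> orthogonal x0 y"
    using orthogonal_to_subspace_exists by blast
  have x0S: "x0 \<in> S" unfolding S_def using x0(2) span_base orthogonal_def by blast
  have subS: "c *\<^sub>R x \<in> S" "x + y \<in> S" if "x \<in> S" "y \<in> S" for x y c
    using that unfolding S_def by (auto simp: inner_add_left)
  define K where "K = S \<inter> sphere 0 1"
  have cK: "compact K" unfolding K_def using clS by (simp add: closed_Int_compact)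
  have "(1 / norm x0) *\<^sub>R x0 \<in> K" unfolding K_def using x0 subS(1)[OF x0S x0S] by simp
  then have neK: "K \<noteq> {}" by blast
  define q where "q = (\<lambda>x::real^'d. (A *v x) \<bullet> x)"
  have cq: "continuous_on K q" unfolding q_def by (intro continuous_intros)
  obtain u where uK: "u \<in> K" and umax: "\<And>y. y \<in> K \<Longrightarrow> q y \<le> q u"
    using continuous_attains_sup[OF cK neK cq] by blast
  define lam where "lam = q u"
  have uS: "u \<in> S" and nu: "norm u = 1" using uK unfolding K_def by auto
  have uu: "u \<bullet> u = 1" using nu by (simp add: norm_eq_1)
  have qscale: "q (c *\<^sub>R x) = c^2 * q x" for c x
    unfolding q_def by (simp add: matrix_vector_mult_scaleR power2_eq_square)
  have lag: "(A *v u) \<bullet> v = 0" if vS: "v \<in> S" and vu: "v \<bullet> u = 0" for v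
  proof -
    define a where "a = (A *v u) \<bullet> v"
    define c where "c = q v - lam * (v \<bullet> v)"
    have symm: "(A *v v) \<bullet> u = a" using sA unfolding symb_def a_def by (simp add: inner_commute)
    have ineq: "2*t*a + t^2*c \<le> 0" for t
    proof -
      define w where "w = u + t *\<^sub>R v"
      have wS: "w \<in> S" unfolding w_def using subS uS vS by blast
      have ww: "w \<bullet> w = 1 + t^2 * (v \<bullet> v)"
        unfolding w_def using uu vu by (simp add: inner_add_left inner_add_right inner_commute power2_eq_square)
      have nw: "norm w > 0"
      proof -
        have "w \<bullet> w > 0" using ww by (simp add: add_pos_nonneg)
        then show ?thesis by (metis inner_zero_left less_irrefl zero_less_norm_iff)
      qed
      have "(1 / norm w) *\<^sub>R w \<in> K" unfolding K_def using wS subS nw by simp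
      then have "q ((1 / norm w) *\<^sub>R w) \<le> lam" using umax lam_def by blast
      then have "(1/norm w)^2 * q w \<le> lam" by (simp add: qscale)
      then have "q w \<le> lam * (norm w)^2" using nw by (simp add: field_simps)
      moreover have "(norm w)^2 = 1 + t^2 * (v \<bullet> v)" using ww by (simp add: power2_norm_eq_inner)
      moreover have "q w = lam + 2*t*a + t^2 * q v"
      proof -
        have "q w = (A *v u) \<bullet> u + t * ((A *v u) \<bullet> v) + t * ((A *v v) \<bullet> u) + t * t * ((A *v v) \<bullet> v)"
          unfolding w_def q_def
          by (simp add: matrix_vector_right_distrib matrix_vector_mult_scaleR inner_add_left inner_add_right
              distrib_left)
        then show ?thesis unfolding lam_def q_def using symm a_def by (simp add: power2_eq_square)
      qed
      ultimately show ?thesis unfolding c_def by (simp add: algebra_simps)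
    qed
    show "(A *v u) \<bullet> v = 0"
    proof (rule ccontr)
      assume "(A *v u) \<bullet> v \<noteq> 0"
      then have an: "a \<noteq> 0" by (simp add: a_def)
      define t where "t = a / (\<bar>c\<bar> + 1)"
      have pos: "\<bar>c\<bar> + 1 > 0" by simp
      have "2*t*a + t^2*c = a^2 * (2*(\<bar>c\<bar>+1) + c) / (\<bar>c\<bar>+1)^2"
      proof -
        have gen: "2*(a/k)*a + (a/k)^2*c = a^2*(2*k+c)/k^2" if "k > 0" for k
          using that by (simp add: field_simps power2_eq_square)
        show ?thesis unfolding t_def using gen[OF pos] by simp
      qed
      moreover have "a^2 * (2*(\<bar>c\<bar>+1) + c) / (\<bar>c\<bar>+1)^2 > 0"
      proof -
        have "2*(\<bar>c\<bar>+1) + c > 0" by (cases "c \<ge> 0") auto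
        moreover have "a^2 > 0" using an by simp
        ultimately show ?thesis using pos by simp
      qed
      ultimately show False using ineq[of t] by simp
    qed
  qed
  define v where "v = A *v u - lam *\<^sub>R u"
  have AeE: "(A *v u) \<bullet> e = 0" if "e \<in> E" for e
  proof -
    have "(A *v u) \<bullet> e = u \<bullet> (A *v e)" using sA unfolding symb_def by simp
    also have "\<dots> = ((A *v e) \<bullet> e) * (u \<bullet> e)" using E that unfolding eigON_def
      by (metis inner_scaleR_right)
    also have "\<dots> = 0" using uS that unfolding S_def by simp
    finally show ?thesis .
  qed
  have vS: "v \<in> S" unfolding S_def v_def using AeE uS unfolding S_def by (simp add: inner_diff_left)
  have vu: "v \<bullet> u = 0" unfolding v_def using uu by (simp add: inner_diff_left lam_def q_def)
  have "v \<bullet> v = (A *v u) \<bullet> v - lam * (u \<bullet> v)" unfolding v_def by (simp add: inner_diff_left)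
  also have "\<dots> = 0" using lag[OF vS vu] vu by (simp add: inner_commute)
  finally have "v = 0" by simp
  then have Au: "A *v u = ((A *v u) \<bullet> u) *\<^sub>R u" unfolding v_def lam_def q_def by simp
  have uE: "u \<notin> E"
  proof
    assume "u \<in> E"
    then have "u \<bullet> u = 0" using uS unfolding S_def by blast
    then show False using uu by simp
  qed
  have "eigON A (insert u E)"
    unfolding eigON_def
  proof (intro conjI)
    show "finite (insert u E)" using E unfolding eigON_def by simp
    show "\<forall>e\<in>insert u E. norm e = 1" using E nu unfolding eigON_def by simp
    show "\<forall>e\<in>insert u E. \<forall>f\<in>insert u E. e \<noteq> f \<longrightarrow> e \<bullet> f = 0"
      using E uS unfolding eigON_def S_def by (auto simp: inner_commute)
    show "\<forall>e\<in>insert u E. A *v e = ((A *v e) \<bullet> e) *\<^sub>R e" using E Au unfolding eigON_def by simp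
  qed
  then show ?thesis using uE by blast
qed

lemma eig_basis:
  fixes A :: "real^'d^'d"
  assumes sA: "symb A"
  shows "\<exists>E. eigON A E \<and> span E = UNIV"
proof -
  define Q where "Q = (\<lambda>k. \<exists>E. eigON A E \<and> card E = k)"
  have "Q 0" unfolding Q_def eigON_def by (intro exI[of _ "{}"]) simp
  moreover have "\<forall>y. Q y \<longrightarrow> y \<le> DIM(real^'d)" unfolding Q_def using eigON_card[of A] by blast
  ultimately obtain k where k: "Q k" "\<And>y. Q y \<Longrightarrow> y \<le> k" using Nat.ex_has_greatest_nat[of Q 0 "DIM(real^'d)"] by blast
  then obtain E where E: "eigON A E" "card E = k" unfolding Q_def by blast
  show ?thesis
  proof (cases "span E = UNIV")
    case True then show ?thesis using E by blast
  next
    case False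
    then obtain u where "u \<notin> E" "eigON A (insert u E)" using eigON_extend[OF sA E(1)] by blast
    moreover have "finite E" using E unfolding eigON_def by simp
    ultimately have "Q (Suc k)" unfolding Q_def using E by (metis card_insert_disjoint)
    then show ?thesis using k(2)[of "Suc k"] by simp
  qed
qed

lemma mv_sum: "(A::real^'d^'d) *v (\<Sum>e\<in>E. g e) = (\<Sum>e\<in>E. A *v g e)"
  by (induct E rule: infinite_finite_induct) (simp_all add: matrix_vector_right_distrib)

lemma on_collapse:
  assumes E: "eigON A E" and e': "e' \<in> E"
  shows "(\<Sum>e\<in>E. c e * (e \<bullet> e')) = c e'"
proof -
  have "(\<Sum>e\<in>E. c e * (e \<bullet> e')) = (\<Sum>e\<in>E. if e = e' then c e else 0)"
  proof (rule sum.cong)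
    fix e assume "e \<in> E"
    then show "c e * (e \<bullet> e') = (if e = e' then c e else 0)"
      using E e' unfolding eigON_def by (auto simp: norm_eq_1)
  qed simp
  also have "\<dots> = c e'" using E e' unfolding eigON_def by simp
  finally show ?thesis .
qed

lemma on_expand:
  assumes E: "eigON A E" and sp: "span E = UNIV"
  shows "x = (\<Sum>e\<in>E. (x \<bullet> e) *\<^sub>R e)"
proof -
  define y where "y = x - (\<Sum>e\<in>E. (x \<bullet> e) *\<^sub>R e)"
  have "y \<bullet> e' = 0" if "e' \<in> E" for e'
  proof -
    have "(\<Sum>e\<in>E. (x \<bullet> e) *\<^sub>R e) \<bullet> e' = (\<Sum>e\<in>E. (x \<bullet> e) * (e \<bullet> e'))"
      by (simp add: inner_sum_left)
    also have "\<dots> = x \<bullet> e'" using on_collapse[OF E that] .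
    finally show ?thesis unfolding y_def by (simp add: inner_diff_left)
  qed
  then have "orthogonal y y" using orthogonal_to_span[of y E y] sp unfolding orthogonal_def by auto
  then have "y = 0" unfolding orthogonal_def by simp
  then show ?thesis unfolding y_def by simp
qed

lemma sqrt_props:
  fixes A :: "real^'d^'d"
  assumes pd: "pos_def A"
  shows "mat_sqrt A ** mat_sqrt A = A \<and> symb (mat_sqrt A)"
proof -
  have sA: "symb A" using pd sym_mat_symb unfolding pos_def_def by blast
  obtain E where E: "eigON A E" and sp: "span E = UNIV" using eig_basis[OF sA] by blast
  have finE: "finite E" using E unfolding eigON_def by simp
  define lam where "lam = (\<lambda>e. (A *v e) \<bullet> e)"
  have Ae: "A *v e = lam e *\<^sub>R e" if "e \<in> E" for e using E that unfolding eigON_def lam_def by blast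
  have lpos: "lam e > 0" if "e \<in> E" for e
  proof -
    have "e \<noteq> 0" using E that unfolding eigON_def by force
    then show ?thesis using pd unfolding pos_def_def lam_def by (simp add: inner_commute)
  qed
  define f where "f = (\<lambda>x. \<Sum>e\<in>E. (sqrt (lam e) * (x \<bullet> e)) *\<^sub>R e)"
  have fdef: "f y = (\<Sum>e\<in>E. (sqrt (lam e) * (y \<bullet> e)) *\<^sub>R e)" for y by (simp add: f_def)
  have lf: "linear f"
    unfolding f_def
    by (rule linearI) (simp_all add: inner_add_left algebra_simps scaleR_add_left sum.distrib scaleR_sum_right)
  define R where "R = matrix f"
  have Rv: "R *v x = f x" for x using lf unfolding R_def by (metis matrix_vector_mul(2))
  have fe: "f x \<bullet> e' = sqrt (lam e') * (x \<bullet> e')" if "e' \<in> E" for x e'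
  proof -
    have "f x \<bullet> e' = (\<Sum>e\<in>E. sqrt (lam e) * (x \<bullet> e) * (e \<bullet> e'))"
      unfolding f_def by (simp add: inner_sum_left)
    also have "\<dots> = sqrt (lam e') * (x \<bullet> e')" using on_collapse[OF E that, of "\<lambda>e. sqrt (lam e) * (x \<bullet> e)"] .
    finally show ?thesis .
  qed
  have RR: "R ** R = A"
  proof (rule matrix_eq[THEN iffD2], intro allI)
    fix x
    have "(R ** R) *v x = f (f x)" by (simp add: Rv matrix_vector_mul_assoc[symmetric])
    also have "\<dots> = (\<Sum>e\<in>E. (lam e * (x \<bullet> e)) *\<^sub>R e)"
      unfolding fdef[of "f x"] using lpos
      by (intro sum.cong refl) (simp add: fe mult.assoc[symmetric] less_imp_le)
    also have "\<dots> = A *v x"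
    proof -
      have "A *v x = A *v (\<Sum>e\<in>E. (x \<bullet> e) *\<^sub>R e)" using on_expand[OF E sp] by metis
      also have "\<dots> = (\<Sum>e\<in>E. (x \<bullet> e) *\<^sub>R (A *v e))" by (simp add: mv_sum matrix_vector_mult_scaleR)
      also have "\<dots> = (\<Sum>e\<in>E. (lam e * (x \<bullet> e)) *\<^sub>R e)" by (intro sum.cong refl) (simp add: Ae)
      finally show ?thesis by simp
    qed
    finally show "(R ** R) *v x = A *v x" .
  qed
  have fsym: "f a \<bullet> c = a \<bullet> f c" for a c
    unfolding f_def by (simp add: inner_sum_left inner_sum_right mult.commute mult.left_commute inner_commute)
  have symR: "symb R" unfolding symb_def Rv using fsym by blast
  have fpsd: "f v \<bullet> v \<ge> 0" for v
    unfolding f_def using lpos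
    by (simp add: inner_sum_left) (intro sum_nonneg, simp add: inner_commute less_imp_le mult.assoc)
  have psdR: "pos_semidef R"
    unfolding pos_semidef_def using symb_sym_mat[OF symR] fpsd by (simp add: Rv inner_commute)
  have uniq: "S = R" if S: "pos_semidef S" "S ** S = A" for S
  proof -
    have sS: "symb S" using S(1) sym_mat_symb unfolding pos_semidef_def by blast
    have Se: "S *v e = sqrt (lam e) *\<^sub>R e" if "e \<in> E" for e
    proof -
      define s where "s = sqrt (lam e)"
      have s0: "s > 0" using lpos[OF that] s_def by simp
      have ss: "s * s = lam e" using lpos[OF that] s_def by (simp add: less_imp_le)
      define w where "w = S *v e - s *\<^sub>R e"
      have "S *v w = S *v (S *v e) - s *\<^sub>R (S *v e)" unfolding w_def
        by (simp add: matrix_vector_mult_diff_distrib matrix_vector_mult_scaleR)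
      also have "\<dots> = lam e *\<^sub>R e - s *\<^sub>R (S *v e)"
        using S(2) Ae[OF that] by (simp add: matrix_vector_mul_assoc)
      also have "\<dots> = - s *\<^sub>R w" unfolding w_def using ss by (simp add: algebra_simps)
      finally have Sw: "S *v w = - s *\<^sub>R w" .
      have "w \<bullet> (S *v w) \<ge> 0" using S(1) unfolding pos_semidef_def by blast
      then have "- s * (w \<bullet> w) \<ge> 0" using Sw by simp
      then have "w \<bullet> w \<le> 0" using s0 by (simp add: mult_le_0_iff)
      then have "w = 0" by (metis inner_eq_zero_iff inner_ge_zero order_antisym)
      then show ?thesis unfolding w_def s_def by simp
    qed
    show ?thesis
    proof (rule matrix_eq[THEN iffD2], intro allI)
      fix x
      have "S *v x = S *v (\<Sum>e\<in>E. (x \<bullet> e) *\<^sub>R e)" using on_expand[OF E sp] by metis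
      also have "\<dots> = (\<Sum>e\<in>E. (x \<bullet> e) *\<^sub>R (S *v e))" by (simp add: mv_sum matrix_vector_mult_scaleR)
      also have "\<dots> = f x" unfolding f_def by (intro sum.cong refl) (simp add: Se)
      finally show "S *v x = R *v x" by (simp add: Rv)
    qed
  qed
  have "mat_sqrt A = R"
    unfolding mat_sqrt_def
    by (rule the1_equality) (use psdR RR uniq in blast)+
  then show ?thesis using RR symR by simp
qed

lemma grad_works:
  fixes f :: "real^'d \<Rightarrow> real"
  assumes "f differentiable (at x)"
  shows "(f has_derivative (\<lambda>v. grad f x \<bullet> v)) (at x)"
proof -
  define F where "F = frechet_derivative f (at x)"
  have dF: "(f has_derivative F) (at x)" using assms frechet_derivative_works F_def by blast
  have lin: "linear F" using dF has_derivative_linear by blast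
  have "F v = grad f x \<bullet> v" for v
  proof -
    have "F v = F (\<Sum>i\<in>UNIV. v$i *\<^sub>R axis i 1)" using basis_expansion[of v] by (simp add: scalar_mult_eq_scaleR)
    also have "\<dots> = (\<Sum>i\<in>UNIV. v$i * F (axis i 1))" by (simp add: linear_sum[OF lin] linear_scale[OF lin])
    also have "\<dots> = grad f x \<bullet> v" unfolding grad_def F_def inner_vec_def by (simp add: mult.commute)
    finally show ?thesis .
  qed
  then have "F = (\<lambda>v. grad f x \<bullet> v)" by auto
  then show ?thesis using dF by simp
qed

lemma grad_unique:
  fixes f :: "real^'d \<Rightarrow> real"
  assumes "(f has_derivative (\<lambda>v. c \<bullet> v)) (at x)"
  shows "grad f x = c"
proof -
  have "frechet_derivative f (at x) = (\<lambda>v. c \<bullet> v)" using frechet_derivative_at[OF assms] by simp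
  then show ?thesis unfolding grad_def by (simp add: vec_eq_iff inner_axis)
qed

lemma hess_works:
  fixes f :: "real^'d \<Rightarrow> real"
  assumes "grad f differentiable (at x)"
  shows "(grad f has_derivative (\<lambda>v. hess f x *v v)) (at x)"
  using assms unfolding hess_def by (simp add: jacobian_works)

lemma line_deriv:
  fixes F :: "real^'d \<Rightarrow> real"
  assumes "\<And>y. (F has_derivative F' y) (at y)" "\<And>y. linear (F' y)"
  shows "((\<lambda>s. F (a + s *\<^sub>R h)) has_real_derivative F' (a + s *\<^sub>R h) h) (at s)"
proof -
  have d1: "((\<lambda>s. a + s *\<^sub>R h) has_derivative (\<lambda>s. s *\<^sub>R h)) (at s)"
    by (auto intro!: derivative_eq_intros)
  have "((\<lambda>s. F (a + s *\<^sub>R h)) has_derivative (\<lambda>t. F' (a + s *\<^sub>R h) (t *\<^sub>R h))) (at s)"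
    by (rule has_derivative_compose[OF d1 assms(1)])
  moreover have "(\<lambda>t. F' (a + s *\<^sub>R h) (t *\<^sub>R h)) = (*) (F' (a + s *\<^sub>R h) h)"
    using linear_scale[OF assms(2)] by (auto simp: mult.commute)
  ultimately show ?thesis unfolding has_field_derivative_def by simp
qed

lemma schwarz_aux:
  fixes f :: "real^'d \<Rightarrow> real" and G :: "real^'d \<Rightarrow> real^'d"
  assumes df: "\<And>y. (f has_derivative (\<lambda>v. G y \<bullet> v)) (at y)"
    and dG: "(G has_derivative (\<lambda>v. M *v v)) (at x)"
    and ep: "\<epsilon> > 0"
  shows "\<exists>\<delta>>0. \<forall>t. 0 < t \<and> t < \<delta> \<longrightarrow>
     \<bar>(f (x + t *\<^sub>R h + t *\<^sub>R k) - f (x + t *\<^sub>R h) - f (x + t *\<^sub>R k) + f x) - t^2 * ((M *v k) \<bullet> h)\<bar> \<le> \<epsilon> * t^2"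
proof -
  define N where "N = norm h + norm k"
  have N0: "N \<ge> 0" unfolding N_def by simp
  define e where "e = \<epsilon> / (2 * (N+1)^2)"
  have e0: "e > 0" unfolding e_def using ep N0 by (simp add: add_nonneg_pos)
  obtain d where d0: "d > 0" and dd: "\<And>y. norm (y - x) < d \<Longrightarrow> norm (G y - G x - M *v (y - x)) \<le> e * norm (y - x)"
    using dG e0 unfolding has_derivative_at_alt by blast
  define \<delta> where "\<delta> = d / (N + 1)"
  have \<delta>0: "\<delta> > 0" unfolding \<delta>_def using d0 N0 by simp
  have "\<forall>t. 0 < t \<and> t < \<delta> \<longrightarrow>
     \<bar>(f (x + t *\<^sub>R h + t *\<^sub>R k) - f (x + t *\<^sub>R h) - f (x + t *\<^sub>R k) + f x) - t^2 * ((M *v k) \<bullet> h)\<bar> \<le> \<epsilon> * t^2"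
  proof (intro allI impI)
    fix t assume t: "0 < t \<and> t < \<delta>"
    have tN: "t * N < d"
    proof -
      have "t * N \<le> t * (N + 1)" using t by simp
      also have "\<dots> < \<delta> * (N + 1)" using t N0 by (intro mult_strict_right_mono) auto
      also have "\<dots> = d" unfolding \<delta>_def using N0 by simp
      finally show ?thesis .
    qed
    define a1 where "a1 = x + t *\<^sub>R k"
    define \<phi> where "\<phi> = (\<lambda>s. f (a1 + s *\<^sub>R h) - f (x + s *\<^sub>R h))"
    have lin: "linear (\<lambda>v. G y \<bullet> v)" for y by (simp add: linear_iff inner_add_right)
    have der: "(\<phi> has_real_derivative (G (a1 + s *\<^sub>R h) \<bullet> h - G (x + s *\<^sub>R h) \<bullet> h)) (at s)" for s
      unfolding \<phi>_def
      by (intro DERIV_diff line_deriv[where F' = "\<lambda>y v. G y \<bullet> v", OF df lin])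
    obtain \<xi> where \<xi>: "0 < \<xi>" "\<xi> < t" and mv: "\<phi> t - \<phi> 0 = (t - 0) * (G (a1 + \<xi> *\<^sub>R h) \<bullet> h - G (x + \<xi> *\<^sub>R h) \<bullet> h)"
      using MVT2[of 0 t \<phi> "\<lambda>s. G (a1 + s *\<^sub>R h) \<bullet> h - G (x + s *\<^sub>R h) \<bullet> h"] t der by blast
    have Delta: "\<phi> t - \<phi> 0 = f (x + t *\<^sub>R h + t *\<^sub>R k) - f (x + t *\<^sub>R h) - f (x + t *\<^sub>R k) + f x"
      unfolding \<phi>_def a1_def by (simp add: algebra_simps)
    define y1 where "y1 = a1 + \<xi> *\<^sub>R h"
    define y2 where "y2 = x + \<xi> *\<^sub>R h"
    have n1: "norm (y1 - x) \<le> t * N"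
    proof -
      have "norm (y1 - x) = norm (t *\<^sub>R k + \<xi> *\<^sub>R h)" unfolding y1_def a1_def by (simp add: algebra_simps)
      also have "\<dots> \<le> t * norm k + \<xi> * norm h"
        using norm_triangle_ineq[of "t *\<^sub>R k" "\<xi> *\<^sub>R h"] t \<xi> by simp
      also have "\<dots> \<le> t * norm k + t * norm h" using \<xi> by (simp add: mult_right_mono)
      finally show ?thesis unfolding N_def by (simp add: algebra_simps)
    qed
    have n2: "norm (y2 - x) \<le> t * N"
    proof -
      have "norm (y2 - x) = \<xi> * norm h" unfolding y2_def using \<xi> by simp
      also have "\<dots> \<le> t * norm h" using \<xi> by (simp add: mult_right_mono)
      also have "\<dots> \<le> t * N" unfolding N_def using t by (simp add: mult_left_mono)
      finally show ?thesis .
    qed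
    define r1 where "r1 = G y1 - G x - M *v (y1 - x)"
    define r2 where "r2 = G y2 - G x - M *v (y2 - x)"
    have r1: "norm r1 \<le> e * (t * N)"
    proof -
      have "norm (y1 - x) < d" using n1 tN by linarith
      then have "norm r1 \<le> e * norm (y1 - x)" using dd unfolding r1_def by blast
      also have "\<dots> \<le> e * (t * N)" using n1 e0 by (simp add: mult_left_mono)
      finally show ?thesis .
    qed
    have r2: "norm r2 \<le> e * (t * N)"
    proof -
      have "norm (y2 - x) < d" using n2 tN by linarith
      then have "norm r2 \<le> e * norm (y2 - x)" using dd unfolding r2_def by blast
      also have "\<dots> \<le> e * (t * N)" using n2 e0 by (simp add: mult_left_mono)
      finally show ?thesis .
    qed
    have Gdiff: "G y1 - G y2 = t *\<^sub>R (M *v k) + (r1 - r2)"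
    proof -
      have "y1 - x - (y2 - x) = t *\<^sub>R k" unfolding y1_def y2_def a1_def by (simp add: algebra_simps)
      then have "M *v (y1 - x) - M *v (y2 - x) = t *\<^sub>R (M *v k)"
        by (metis matrix_vector_mult_diff_distrib matrix_vector_mult_scaleR)
      then show ?thesis unfolding r1_def r2_def by (simp add: algebra_simps)
    qed
    have "\<phi> t - \<phi> 0 = t * ((G y1 - G y2) \<bullet> h)" using mv unfolding y1_def y2_def by (simp add: inner_diff_left)
    also have "\<dots> = t^2 * ((M *v k) \<bullet> h) + t * ((r1 - r2) \<bullet> h)"
      unfolding Gdiff by (simp add: inner_add_left power2_eq_square algebra_simps)
    finally have eq: "\<phi> t - \<phi> 0 - t^2 * ((M *v k) \<bullet> h) = t * ((r1 - r2) \<bullet> h)" by simp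
    have "\<bar>(r1 - r2) \<bullet> h\<bar> \<le> norm (r1 - r2) * norm h" by (rule Cauchy_Schwarz_ineq2)
    also have "\<dots> \<le> (2 * e * (t * N)) * N"
    proof (rule mult_mono)
      show "norm (r1 - r2) \<le> 2 * e * (t * N)" using norm_triangle_ineq4[of r1 r2] r1 r2 by simp
      show "norm h \<le> N" unfolding N_def by simp
    qed (use e0 t N0 in auto)
    finally have b1: "\<bar>(r1 - r2) \<bullet> h\<bar> \<le> 2 * e * N^2 * t" by (simp add: power2_eq_square algebra_simps)
    have "2 * e * N^2 \<le> \<epsilon>"
    proof -
      have "N^2 \<le> (N+1)^2" using N0 by (simp add: power_mono)
      then have "2 * e * N^2 \<le> 2 * e * (N+1)^2" using e0 by simp
      also have "\<dots> = \<epsilon>" unfolding e_def using N0 by simp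
      finally show ?thesis .
    qed
    then have "2 * e * N^2 * t \<le> \<epsilon> * t" using t by (simp add: mult_right_mono)
    then have zb: "\<bar>(r1 - r2) \<bullet> h\<bar> \<le> \<epsilon> * t" using b1 by linarith
    have "\<bar>t * ((r1 - r2) \<bullet> h)\<bar> = t * \<bar>(r1 - r2) \<bullet> h\<bar>" using t by (simp add: abs_mult)
    also have "\<dots> \<le> t * (\<epsilon> * t)" using zb t by (simp add: mult_left_mono)
    finally have "\<bar>t * ((r1 - r2) \<bullet> h)\<bar> \<le> \<epsilon> * t^2" by (simp add: power2_eq_square mult_ac)
    then show "\<bar>(f (x + t *\<^sub>R h + t *\<^sub>R k) - f (x + t *\<^sub>R h) - f (x + t *\<^sub>R k) + f x) - t^2 * ((M *v k) \<bullet> h)\<bar> \<le> \<epsilon> * t^2"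
      using eq Delta by simp
  qed
  then show ?thesis using \<delta>0 by blast
qed

lemma schwarz:
  fixes f :: "real^'d \<Rightarrow> real" and G :: "real^'d \<Rightarrow> real^'d"
  assumes df: "\<And>y. (f has_derivative (\<lambda>v. G y \<bullet> v)) (at y)"
    and dG: "(G has_derivative (\<lambda>v. M *v v)) (at x)"
  shows "(M *v h) \<bullet> k = h \<bullet> (M *v k)"
proof -
  have H: "\<bar>(M *v k) \<bullet> h - (M *v h) \<bullet> k\<bar> \<le> 2 * \<epsilon>" if ep: "\<epsilon> > 0" for \<epsilon>
  proof -
    obtain d1 where d1: "d1 > 0" "\<forall>t. 0 < t \<and> t < d1 \<longrightarrow>
     \<bar>(f (x + t *\<^sub>R h + t *\<^sub>R k) - f (x + t *\<^sub>R h) - f (x + t *\<^sub>R k) + f x) - t^2 * ((M *v k) \<bullet> h)\<bar> \<le> \<epsilon> * t^2"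
      using schwarz_aux[OF df dG ep, of h k] by blast
    obtain d2 where d2: "d2 > 0" "\<forall>t. 0 < t \<and> t < d2 \<longrightarrow>
     \<bar>(f (x + t *\<^sub>R k + t *\<^sub>R h) - f (x + t *\<^sub>R k) - f (x + t *\<^sub>R h) + f x) - t^2 * ((M *v h) \<bullet> k)\<bar> \<le> \<epsilon> * t^2"
      using schwarz_aux[OF df dG ep, of k h] by blast
    define t where "t = min d1 d2 / 2"
    have t: "0 < t" "t < d1" "t < d2" unfolding t_def using d1 d2 by auto
    have comm: "x + t *\<^sub>R k + t *\<^sub>R h = x + t *\<^sub>R h + t *\<^sub>R k" by (simp add: algebra_simps)
    define D where "D = f (x + t *\<^sub>R h + t *\<^sub>R k) - f (x + t *\<^sub>R h) - f (x + t *\<^sub>R k) + f x"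
    have a1: "\<bar>D - t^2 * ((M *v k) \<bullet> h)\<bar> \<le> \<epsilon> * t^2" using d1(2) t unfolding D_def by blast
    have "\<bar>(f (x + t *\<^sub>R k + t *\<^sub>R h) - f (x + t *\<^sub>R k) - f (x + t *\<^sub>R h) + f x) - t^2 * ((M *v h) \<bullet> k)\<bar> \<le> \<epsilon> * t^2"
      using d2(2) t by blast
    then have a2: "\<bar>D - t^2 * ((M *v h) \<bullet> k)\<bar> \<le> \<epsilon> * t^2" unfolding D_def comm by linarith
    have "\<bar>t^2 * ((M *v k) \<bullet> h) - t^2 * ((M *v h) \<bullet> k)\<bar> \<le> t^2 * (2 * \<epsilon>)"
    proof -
      have g: "\<bar>X - Y\<bar> \<le> c + c" if "\<bar>DD - X\<bar> \<le> c" "\<bar>DD - Y\<bar> \<le> c" for DD X Y c :: real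
        using that by arith
      show ?thesis using g[OF a1 a2] by (simp add: mult_ac)
    qed
    then have "t^2 * \<bar>(M *v k) \<bullet> h - (M *v h) \<bullet> k\<bar> \<le> t^2 * (2 * \<epsilon>)"
      by (simp add: abs_mult right_diff_distrib[symmetric])
    then show ?thesis using t by simp
  qed
  have "\<bar>(M *v k) \<bullet> h - (M *v h) \<bullet> k\<bar> \<le> 0 + e" if "e > 0" for e
    using H[of "e/2"] that by simp
  then have "\<bar>(M *v k) \<bullet> h - (M *v h) \<bullet> k\<bar> \<le> 0" by (rule field_le_epsilon)
  then have "(M *v k) \<bullet> h = (M *v h) \<bullet> k" by simp
  then show ?thesis by (simp add: inner_commute)
qed

lemma tangent_ineq:
  fixes f :: "real^'d \<Rightarrow> real"
  assumes cv: "convex_on UNIV f" and df: "\<And>y. (f has_derivative (\<lambda>v. G y \<bullet> v)) (at y)"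
  shows "f y - f x \<ge> G x \<bullet> (y - x)"
proof -
  define \<phi> where "\<phi> = (\<lambda>s. f (x + s *\<^sub>R (y - x)))"
  have lin: "linear (\<lambda>v. G y \<bullet> v)" for y by (simp add: linear_iff inner_add_right)
  have der: "(\<phi> has_real_derivative G (x + s *\<^sub>R (y - x)) \<bullet> (y - x)) (at s)" for s
    unfolding \<phi>_def by (rule line_deriv[where F' = "\<lambda>y v. G y \<bullet> v", OF df lin])
  have cphi: "convex_on UNIV \<phi>"
  proof (rule convex_onI)
    fix t a b :: real assume t: "t > 0" "t < 1"
    have eq: "x + ((1 - t) *\<^sub>R a + t *\<^sub>R b) *\<^sub>R (y - x) =
       (1 - t) *\<^sub>R (x + a *\<^sub>R (y - x)) + t *\<^sub>R (x + b *\<^sub>R (y - x))"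
      by (simp add: algebra_simps)
    show "\<phi> ((1 - t) *\<^sub>R a + t *\<^sub>R b) \<le> (1 - t) * \<phi> a + t * \<phi> b"
      unfolding \<phi>_def eq using convex_onD[OF cv, of t] t by simp
  qed simp
  have "\<phi> 1 - \<phi> 0 \<ge> (G x \<bullet> (y - x)) * (1 - 0)"
    by (rule convex_on_imp_above_tangent[OF cphi]) (use der[of 0] in auto)
  then show ?thesis unfolding \<phi>_def by simp
qed

lemma grad_mono:
  fixes f :: "real^'d \<Rightarrow> real"
  assumes cv: "convex_on UNIV f" and df: "\<And>y. (f has_derivative (\<lambda>v. G y \<bullet> v)) (at y)"
  shows "(G y - G x) \<bullet> (y - x) \<ge> 0"
proof -
  have "f y - f x \<ge> G x \<bullet> (y - x)" "f x - f y \<ge> G y \<bullet> (x - y)"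
    using tangent_ineq[OF cv df] by auto
  then show ?thesis by (simp add: inner_diff_left inner_diff_right algebra_simps)
qed

lemma hess_psd:
  fixes f :: "real^'d \<Rightarrow> real"
  assumes cv: "convex_on UNIV f" and df: "\<And>y. (f has_derivative (\<lambda>v. G y \<bullet> v)) (at y)"
    and dG: "\<And>y. (G has_derivative (\<lambda>v. M y *v v)) (at y)"
  shows "(M x *v v) \<bullet> v \<ge> 0"
proof (rule ccontr)
  assume neg: "\<not> (M x *v v) \<bullet> v \<ge> 0"
  define \<psi> where "\<psi> = (\<lambda>s. G (x + s *\<^sub>R v) \<bullet> v)"
  have dF: "((\<lambda>y. G y \<bullet> v) has_derivative (\<lambda>w. (M y *v w) \<bullet> v)) (at y)" for y
    by (rule has_derivative_inner_left[OF dG])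
  have lin: "linear (\<lambda>w. (M y *v w) \<bullet> v)" for y
    by (simp add: linear_iff inner_add_left matrix_vector_right_distrib matrix_vector_mult_scaleR)
  have "(\<psi> has_real_derivative (M (x + 0 *\<^sub>R v) *v v) \<bullet> v) (at 0)"
    unfolding \<psi>_def by (rule line_deriv[where F' = "\<lambda>y w. (M y *v w) \<bullet> v", OF dF lin])
  then have "(\<psi> has_real_derivative (M x *v v) \<bullet> v) (at 0)" by simp
  then obtain d where "d > 0" "\<And>h. h > 0 \<Longrightarrow> h < d \<Longrightarrow> \<psi> 0 > \<psi> (0 + h)"
    using DERIV_neg_dec_right neg by (metis not_le)
  then have "\<psi> 0 > \<psi> (d/2)" by simp
  moreover have "(G (x + (d/2) *\<^sub>R v) - G x) \<bullet> ((x + (d/2) *\<^sub>R v) - x) \<ge> 0"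
    by (rule grad_mono[OF cv df])
  then have "(d/2) * (\<psi> (d/2) - \<psi> 0) \<ge> 0" unfolding \<psi>_def by (simp add: inner_diff_left)
  ultimately show False using \<open>d > 0\<close> by (simp add: zero_le_mult_iff)
qed

lemma QB:
  fixes H R S :: "real^'d^'d"
  assumes sH: "symb H" and pH: "\<And>v. (H *v v) \<bullet> v \<ge> 0" and iH: "invertible H"
    and sR: "symb R" and RR: "R ** R = S" and on: "op_norm (R ** matrix_inv H ** R) \<le> C"
  shows "e \<bullet> (S *v e) \<le> C * ((H *v e) \<bullet> e)"
proof -
  define Hi where "Hi = matrix_inv H"
  have sHi: "symb Hi" unfolding Hi_def by (rule symb_inv[OF sH iH])
  have pHi: "(Hi *v a) \<bullet> a \<ge> 0" for a unfolding Hi_def by (rule psd_inv[OF sH iH pH])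
  define z where "z = S *v e"
  define u where "u = H *v e"
  define q where "q = e \<bullet> (S *v e)"
  define p where "p = (H *v e) \<bullet> e"
  have Se: "S *v e = R *v (R *v e)" unfolding RR[symmetric] by (simp add: matrix_vector_mul_assoc)
  have q_eq: "q = (R *v e) \<bullet> (R *v e)" unfolding q_def Se using sR unfolding symb_def by simp
  have q0: "q \<ge> 0" unfolding q_eq by simp
  have p0: "p \<ge> 0" unfolding p_def using pH by simp
  have C0: "C \<ge> 0"
    using on onorm_pos_le[OF matrix_vector_mul_bounded_linear] unfolding op_norm_def by (meson order_trans)
  have "((Hi *v z) \<bullet> u)^2 \<le> ((Hi *v z) \<bullet> z) * ((Hi *v u) \<bullet> u)" by (rule bil_CS[OF sHi pHi])
  moreover have "(Hi *v z) \<bullet> u = q"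
  proof -
    have "(Hi *v z) \<bullet> u = z \<bullet> (Hi *v u)" using sHi unfolding symb_def by simp
    also have "Hi *v u = e" unfolding u_def Hi_def using inv_facts[OF iH] by simp
    finally show ?thesis unfolding q_def z_def by (simp add: inner_commute)
  qed
  moreover have "(Hi *v u) \<bullet> u = p"
    unfolding u_def p_def Hi_def using inv_facts[OF iH] by (simp add: inner_commute)
  moreover have "(Hi *v z) \<bullet> z \<le> C * q"
  proof -
    define y where "y = R *v e"
    have "(Hi *v z) \<bullet> z = (Hi *v (R *v y)) \<bullet> (R *v y)" unfolding z_def Se y_def ..
    also have "\<dots> = (R *v (Hi *v (R *v y))) \<bullet> y" using sR unfolding symb_def by simp
    also have "\<dots> = ((R ** Hi ** R) *v y) \<bullet> y" by (simp add: matrix_vector_mul_assoc matrix_mul_assoc)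
    also have "\<dots> \<le> norm ((R ** Hi ** R) *v y) * norm y" by (rule norm_cauchy_schwarz)
    also have "\<dots> \<le> (op_norm (R ** Hi ** R) * norm y) * norm y"
      by (rule mult_right_mono) (auto simp: op_norm_def intro!: onorm[OF matrix_vector_mul_bounded_linear])
    also have "\<dots> \<le> (C * norm y) * norm y"
      using on unfolding Hi_def by (intro mult_right_mono) auto
    also have "\<dots> = C * q" unfolding q_eq y_def by (simp add: power2_norm_eq_inner[symmetric] power2_eq_square)
    finally show ?thesis .
  qed
  ultimately have "q^2 \<le> ((Hi *v z) \<bullet> z) * p" "((Hi *v z) \<bullet> z) * p \<le> (C * q) * p"
    using p0 by (auto intro: mult_right_mono)
  then have "q * q \<le> q * (C * p)" by (simp add: power2_eq_square mult_ac)
  then have qC: "q \<le> C * p"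
  proof (cases "q > 0")
    case True
    then show ?thesis using \<open>q * q \<le> q * (C * p)\<close> by simp
  next
    case False
    then show ?thesis using q0 C0 p0 by simp
  qed
  then show ?thesis unfolding q_def p_def .
qed

lemma XB:
  fixes S :: "real^'d^'d"
  assumes pd: "pos_def S" and w: "mnorm (matrix_inv S) w \<le> Ch" and e: "mnorm S e = r"
  shows "\<bar>w \<bullet> e\<bar> \<le> Ch * r"
proof -
  have sS: "symb S" using pd sym_mat_symb unfolding pos_def_def by blast
  have pS: "(S *v v) \<bullet> v \<ge> 0" for v
  proof (cases "v = 0")
    case False
    then have "v \<bullet> (S *v v) > 0" using pd unfolding pos_def_def by blast
    then show ?thesis by (simp add: inner_commute)
  qed simp
  have iS: "invertible S"
  proof -
    have "\<forall>x. S *v x = 0 \<longrightarrow> x = 0"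
    proof (intro allI impI)
      fix x assume "S *v x = 0"
      then have "x \<bullet> (S *v x) = 0" by simp
      then show "x = 0" using pd unfolding pos_def_def by (metis less_irrefl)
    qed
    then have "\<exists>B. B ** S = mat 1" by (simp add: matrix_left_invertible_ker)
    then show ?thesis by (simp add: invertible_left_inverse)
  qed
  define Si where "Si = matrix_inv S"
  have sSi: "symb Si" unfolding Si_def by (rule symb_inv[OF sS iS])
  have pSi: "(Si *v a) \<bullet> a \<ge> 0" for a unfolding Si_def by (rule psd_inv[OF sS iS pS])
  have "w \<bullet> e = w \<bullet> (Si *v (S *v e))" unfolding Si_def using inv_facts[OF iS] by simp
  also have "\<dots> = (Si *v w) \<bullet> (S *v e)" using sSi unfolding symb_def by simp
  finally have we: "w \<bullet> e = (Si *v w) \<bullet> (S *v e)" .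
  have "((Si *v w) \<bullet> (S *v e))^2 \<le> ((Si *v w) \<bullet> w) * ((Si *v (S *v e)) \<bullet> (S *v e))"
    by (rule bil_CS[OF sSi pSi])
  also have "(Si *v (S *v e)) \<bullet> (S *v e) = e \<bullet> (S *v e)" unfolding Si_def using inv_facts[OF iS] by simp
  finally have cs: "(w \<bullet> e)^2 \<le> ((Si *v w) \<bullet> w) * (e \<bullet> (S *v e))" unfolding we .
  have a: "(Si *v w) \<bullet> w \<le> Ch^2" and Ch0: "Ch \<ge> 0"
  proof -
    have s1: "sqrt (w \<bullet> (Si *v w)) \<le> Ch" using w unfolding mnorm_def Si_def .
    have "w \<bullet> (Si *v w) \<ge> 0" using pSi by (simp add: inner_commute)
    have s0: "sqrt (w \<bullet> (Si *v w)) \<ge> 0" using pSi[of w] by (simp add: inner_commute)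
    have "(sqrt (w \<bullet> (Si *v w)))^2 \<le> Ch^2" "Ch \<ge> 0"
      using power_mono[OF s1 s0, of 2] s1 s0 by linarith+
    then show "(Si *v w) \<bullet> w \<le> Ch^2" "Ch \<ge> 0"
      using \<open>w \<bullet> (Si *v w) \<ge> 0\<close> by (simp_all add: inner_commute)
  qed
  have b: "e \<bullet> (S *v e) = r^2" and r0: "r \<ge> 0"
  proof -
    have ge: "e \<bullet> (S *v e) \<ge> 0" using pS by (simp add: inner_commute)
    have sq: "sqrt (e \<bullet> (S *v e)) = r" using e unfolding mnorm_def .
    have "r^2 = e \<bullet> (S *v e)" using real_sqrt_pow2[OF ge] unfolding sq .
    then show "e \<bullet> (S *v e) = r^2" by simp
    show "r \<ge> 0" using real_sqrt_ge_zero[OF ge] unfolding sq .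
  qed
  have m: "((Si *v w) \<bullet> w) * r^2 \<le> Ch^2 * r^2" by (rule mult_right_mono[OF a]) simp
  have cs2: "(w \<bullet> e)^2 \<le> ((Si *v w) \<bullet> w) * r^2" using cs unfolding b .
  have "\<bar>w \<bullet> e\<bar>^2 \<le> (Ch * r)^2" unfolding power2_abs power_mult_distrib using cs2 m by linarith
  then show ?thesis by (rule power2_le_imp_le) (use Ch0 r0 in simp)
qed

theorem mainTheorem3:
  fixes l :: "nat \<Rightarrow> real^'d \<Rightarrow> real"
    and n :: nat and T :: "nat set"
    and \<theta>hat \<theta>T :: "real^'d"
    and \<Sigma> :: "real^'d^'d"
    and r C_op C_h :: real
  defines "L \<equiv> (\<lambda>\<theta>. \<Sum>i\<in>{1..n} - T. l i \<theta>)"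
  defines "H \<equiv> hess L \<theta>hat"
  defines "g \<equiv> grad L \<theta>hat"
  defines "\<theta>NS \<equiv> \<theta>hat - matrix_inv H *v g"
  defines "B \<equiv> {\<theta>NS + e | e. mnorm \<Sigma> e \<le> r}"
  assumes C2: "\<And>i. i \<in> {1..n} \<Longrightarrow> C2 (l i)"
    and T_sub: "T \<subseteq> {1..n}"
    and L_convex: "convex_on UNIV L"
    and stat: "(\<Sum>i=1..n. grad (l i) \<theta>hat) = 0"
    and H_inv: "invertible H"
    and Sigma_pd: "pos_def \<Sigma>"
    and r_pos: "r > 0"
    and cond_i: "\<And>\<theta>. \<theta> \<in> B \<Longrightarrow> invertible (hess L \<theta>) \<and>
         op_norm (mat_sqrt \<Sigma> ** matrix_inv (hess L \<theta>) ** mat_sqrt \<Sigma>) \<le> C_op"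
    and cond_ii: "\<And>\<theta>. \<theta> \<in> closed_segment \<theta>hat \<theta>NS \<Longrightarrow>
         mnorm (matrix_inv \<Sigma>) ((hess L \<theta> - H) *v (matrix_inv H *v g)) \<le> C_h"
    and cond_iii: "C_h * C_op < r"
    and crit: "grad L \<theta>T = 0"
  shows "\<theta>T \<in> B"
proof -
  define I where "I = {1..n} - T"
  have finI: "finite I" unfolding I_def by simp
  have Ldef': "L = (\<lambda>\<theta>. \<Sum>i\<in>I. l i \<theta>)" using L_def I_def by simp
  have IC2: "C2 (l i)" if "i \<in> I" for i using C2 that unfolding I_def by blast
  have dli: "l i differentiable (at x)" "grad (l i) differentiable (at x)" if "i \<in> I" for i x
    using IC2[OF that] unfolding C2_def by blast+
  have derL: "(L has_derivative (\<lambda>v. (\<Sum>i\<in>I. grad (l i) x) \<bullet> v)) (at x)" for x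
  proof -
    have "((\<lambda>\<theta>. \<Sum>i\<in>I. l i \<theta>) has_derivative (\<lambda>v. \<Sum>i\<in>I. grad (l i) x \<bullet> v)) (at x)"
      by (rule has_derivative_sum) (use grad_works dli in blast)
    then show ?thesis unfolding Ldef' by (simp add: inner_sum_left)
  qed
  have gradL_eq: "grad L x = (\<Sum>i\<in>I. grad (l i) x)" for x by (rule grad_unique[OF derL])
  have DL: "(L has_derivative (\<lambda>v. grad L x \<bullet> v)) (at x)" for x using derL[of x] gradL_eq[of x] by simp
  have DG: "(grad L has_derivative (\<lambda>v. hess L x *v v)) (at x)" for x
  proof -
    have geq: "grad L = (\<lambda>x. \<Sum>i\<in>I. grad (l i) x)" by (rule ext) (rule gradL_eq)
    have "((\<lambda>x. \<Sum>i\<in>I. grad (l i) x) has_derivative (\<lambda>v. \<Sum>i\<in>I. hess (l i) x *v v)) (at x)"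
      by (rule has_derivative_sum) (use hess_works dli in blast)
    then have "grad L differentiable (at x)" unfolding geq differentiable_def by blast
    then show ?thesis by (rule hess_works)
  qed
  have symH: "symb (hess L x)" for x unfolding symb_def using schwarz[OF DL DG] by blast
  have psdH: "(hess L x *v v) \<bullet> v \<ge> 0" for x v by (rule hess_psd[OF L_convex DL DG])
  have gmono: "(grad L y - grad L x) \<bullet> (y - x) \<ge> 0" for x y by (rule grad_mono[OF L_convex DL])
  have sq: "mat_sqrt \<Sigma> ** mat_sqrt \<Sigma> = \<Sigma> \<and> symb (mat_sqrt \<Sigma>)" by (rule sqrt_props[OF Sigma_pd])
  have Snn: "e \<bullet> (\<Sigma> *v e) \<ge> 0" for e
  proof (cases "e = 0")
    case False then show ?thesis using Sigma_pd unfolding pos_def_def by (simp add: less_imp_le)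
  qed simp
  have mn_scale: "mnorm \<Sigma> (s *\<^sub>R e) = \<bar>s\<bar> * mnorm \<Sigma> e" for s e
  proof -
    have "(s *\<^sub>R e) \<bullet> (\<Sigma> *v (s *\<^sub>R e)) = s^2 * (e \<bullet> (\<Sigma> *v e))"
      by (simp add: matrix_vector_mult_scaleR power2_eq_square)
    then show ?thesis unfolding mnorm_def by (simp add: real_sqrt_mult)
  qed
  have inB: "\<theta>NS + e \<in> B" if "mnorm \<Sigma> e \<le> r" for e using that unfolding B_def by blast
  have QBat: "e' \<bullet> (\<Sigma> *v e') \<le> C_op * ((hess L (\<theta>NS + e) *v e') \<bullet> e')" if "mnorm \<Sigma> e \<le> r" for e e'
  proof -
    have ci: "invertible (hess L (\<theta>NS + e))"
      "op_norm (mat_sqrt \<Sigma> ** matrix_inv (hess L (\<theta>NS + e)) ** mat_sqrt \<Sigma>) \<le> C_op"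
      using cond_i[OF inB[OF that]] by blast+
    show ?thesis by (rule QB[OF symH psdH ci(1) conjunct2[OF sq] conjunct1[OF sq] ci(2)])
  qed
  have neg: "A *v (- x) = - (A *v x)" for A :: "real^'d^'d" and x
    by (metis diff_0 matrix_vector_mult_0_right matrix_vector_mult_diff_distrib)
  have KEY: "grad L (\<theta>NS + e) \<bullet> e > 0" if me: "mnorm \<Sigma> e = r" for e
  proof -
    have eSe: "e \<bullet> (\<Sigma> *v e) = r^2"
    proof -
      have "sqrt (e \<bullet> (\<Sigma> *v e)) = r" using me unfolding mnorm_def .
      then show ?thesis using real_sqrt_pow2[OF Snn[of e]] by simp
    qed
    have dF: "((\<lambda>y. grad L y \<bullet> e) has_derivative (\<lambda>w. (hess L y *v w) \<bullet> e)) (at y)" for y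
      by (rule has_derivative_inner_left[OF DG])
    have lin: "linear (\<lambda>w. (hess L y *v w) \<bullet> e)" for y
      by (simp add: linear_iff inner_add_left matrix_vector_right_distrib matrix_vector_mult_scaleR)
    have lderiv: "((\<lambda>s. grad L (a + s *\<^sub>R h) \<bullet> e) has_real_derivative (hess L (a + s *\<^sub>R h) *v h) \<bullet> e) (at s)" for a h s
      by (rule line_deriv[where F' = "\<lambda>y w. (hess L y *v w) \<bullet> e", OF dF lin])
    obtain \<xi> where \<xi>: "0 < \<xi>" "\<xi> < 1" and mv1:
      "grad L (\<theta>NS + 1 *\<^sub>R e) \<bullet> e - grad L (\<theta>NS + 0 *\<^sub>R e) \<bullet> e = (1 - 0) * ((hess L (\<theta>NS + \<xi> *\<^sub>R e) *v e) \<bullet> e)"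
      using MVT2[OF zero_less_one, of "\<lambda>s. grad L (\<theta>NS + s *\<^sub>R e) \<bullet> e" "\<lambda>s. (hess L (\<theta>NS + s *\<^sub>R e) *v e) \<bullet> e",
        OF lderiv] by blast
    define p where "p = (hess L (\<theta>NS + \<xi> *\<^sub>R e) *v e) \<bullet> e"
    have p0: "p \<ge> 0" unfolding p_def by (rule psdH)
    have "mnorm \<Sigma> (\<xi> *\<^sub>R e) \<le> r" using \<xi> me r_pos by (simp add: mn_scale)
    then have rp: "r^2 \<le> C_op * p" using QBat[of "\<xi> *\<^sub>R e" e] eSe unfolding p_def by simp
    have psi1: "grad L (\<theta>NS + e) \<bullet> e = grad L \<theta>NS \<bullet> e + p" using mv1 unfolding p_def by simp
    define d where "d = \<theta>NS - \<theta>hat"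
    have d_eq: "d = - (matrix_inv H *v g)" unfolding d_def \<theta>NS_def by simp
    have lin2: "((\<lambda>s. s * c) has_real_derivative c) (at s)" for s c :: real
      by (auto intro!: derivative_eq_intros)
    obtain \<xi>2 where \<xi>2: "0 < \<xi>2" "\<xi>2 < 1" and mv2:
      "(grad L (\<theta>hat + 1 *\<^sub>R d) \<bullet> e - 1 * ((H *v d) \<bullet> e)) - (grad L (\<theta>hat + 0 *\<^sub>R d) \<bullet> e - 0 * ((H *v d) \<bullet> e))
        = (1 - 0) * ((hess L (\<theta>hat + \<xi>2 *\<^sub>R d) *v d) \<bullet> e - (H *v d) \<bullet> e)"
      using MVT2[of 0 1 "\<lambda>s. grad L (\<theta>hat + s *\<^sub>R d) \<bullet> e - s * ((H *v d) \<bullet> e)"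
          "\<lambda>s. (hess L (\<theta>hat + s *\<^sub>R d) *v d) \<bullet> e - (H *v d) \<bullet> e", OF zero_less_one DERIV_diff[OF lderiv lin2]]
      by blast
    define w where "w = (hess L (\<theta>hat + \<xi>2 *\<^sub>R d) - H) *v (matrix_inv H *v g)"
    have seg: "\<theta>hat + \<xi>2 *\<^sub>R d \<in> closed_segment \<theta>hat \<theta>NS"
      unfolding in_segment d_def using \<xi>2 by (intro exI[of _ \<xi>2]) (simp add: algebra_simps)
    have wb: "\<bar>w \<bullet> e\<bar> \<le> C_h * r" using XB[OF Sigma_pd cond_ii[OF seg, folded w_def] me] .
    have Hd: "H *v d = - g" unfolding d_eq neg using inv_facts[OF H_inv] by simp
    have "(hess L (\<theta>hat + \<xi>2 *\<^sub>R d) *v d) \<bullet> e - (H *v d) \<bullet> e = - (w \<bullet> e)"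
      unfolding w_def d_eq neg by (simp add: matrix_vector_mult_diff_rdistrib inner_diff_left)
    moreover have "\<theta>hat + 1 *\<^sub>R d = \<theta>NS" unfolding d_def by simp
    moreover have "grad L \<theta>hat = g" unfolding g_def ..
    ultimately have "grad L \<theta>NS \<bullet> e = - (w \<bullet> e)" using mv2 Hd by simp
    then have psi0: "grad L \<theta>NS \<bullet> e \<ge> - (C_h * r)" using wb by linarith
    have r2: "r^2 > 0" using r_pos by simp
    have Cpos: "C_op > 0"
    proof (rule ccontr)
      assume "\<not> C_op > 0"
      then have "C_op * p \<le> 0" using p0 by (simp add: mult_nonpos_nonneg)
      then show False using rp r2 by linarith
    qed
    have "C_op * (C_h * r) < C_op * p"
    proof -
      have "C_h * C_op * r < r * r" using cond_iii r_pos by (simp add: mult_strict_right_mono)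
      then show ?thesis using rp by (simp add: power2_eq_square mult_ac)
    qed
    then have "C_h * r < p" using Cpos by simp
    then show ?thesis using psi1 psi0 by linarith
  qed
  show "\<theta>T \<in> B"
  proof (rule ccontr)
    assume nB: "\<theta>T \<notin> B"
    define v where "v = \<theta>T - \<theta>NS"
    define m where "m = mnorm \<Sigma> v"
    have mr: "m > r"
    proof (rule ccontr)
      assume "\<not> m > r"
      then have "\<theta>NS + v \<in> B" using inB m_def by simp
      then show False using nB v_def by simp
    qed
    define t where "t = r / m"
    have t: "0 < t" "t < 1" unfolding t_def using mr r_pos by auto
    define e where "e = t *\<^sub>R v"
    have "mnorm \<Sigma> e = r" unfolding e_def mn_scale using t mr r_pos unfolding t_def m_def by simp
    then have K: "grad L (\<theta>NS + e) \<bullet> e > 0" by (rule KEY)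
    have "(grad L \<theta>T - grad L (\<theta>NS + e)) \<bullet> (\<theta>T - (\<theta>NS + e)) \<ge> 0" by (rule gmono)
    moreover have "\<theta>T - (\<theta>NS + e) = (1 - t) *\<^sub>R v" unfolding e_def v_def by (simp add: algebra_simps)
    ultimately have "(1 - t) * (grad L (\<theta>NS + e) \<bullet> v) \<le> 0" using crit by simp
    then have "grad L (\<theta>NS + e) \<bullet> v \<le> 0" using t by (simp add: mult_le_0_iff)
    then have "grad L (\<theta>NS + e) \<bullet> e \<le> 0" unfolding e_def using t by (simp add: mult_le_0_iff)
    then show False using K by simp
  qed
qed

end
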